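(* Let \(k\le s\le t\) be non-negative integers, and let \(J=(j_0<\dots<j_{s-1})\) and \(K=(k_0<\dots<k_{t-1})\) be strictly increasing sequences of non-negative integers such that \(k_{t-s+p}\ge j_p\) for \(p=0,\dots,s-1\). Then \(N_k(K)\ge N_k(J)\), and the inequality is strict if \(K\ne J\).
   Context: For a strictly increasing sequence \(J=(j_0<\dots<j_{r-1})\) of non-negative integers of length \(r\ge k\), \(N_k(J)=r(r-k)+\sum_{q=0}^{r-1}(j_q-q)\). *)

theory Defs
  imports Main
begin

text \<open>A strictly increasing sequence J = (j_0 < ... < j_{r-1}) of non-negative integers
  is represented as a list of naturals with sorted_wrt (<).\<close>

definition Nk :: "nat \<Rightarrow> nat list \<Rightarrow> int" where
  "Nk k J = int (length J) * (int (length J) - int k)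
            + (\<Sum>q<length J. int (J ! q) - int q)"

end

theory Submission
  imports Defs
begin

lemma nth_ge_idx: "sorted_wrt (<) (K::nat list) \<Longrightarrow> q < length K \<Longrightarrow> q \<le> K ! q"
proof (induction q)
  case 0 then show ?case by simp
next
  case (Suc q)
  then have "K ! q < K ! Suc q" using sorted_wrt_nth_less by fastforce
  with Suc show ?case by simp
qed

lemma sum_split_shift: "(\<Sum>q<d+s. f q) = (\<Sum>q<d. f q) + (\<Sum>p<s. f (d+p::nat)) "
  for f :: "nat \<Rightarrow> int"
  by (induction s) auto

theorem lemma4p16:
  fixes k s t :: nat and J K :: "nat list"
  assumes "k \<le> s" and "s \<le> t"
    and "length J = s" and "length K = t"
    and "sorted_wrt (<) J" and "sorted_wrt (<) K"
    and "\<forall>p<s. K ! (t - s + p) \<ge> J ! p"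
  shows "Nk k K \<ge> Nk k J \<and> (K \<noteq> J \<longrightarrow> Nk k K > Nk k J)"
proof -
  define d where "d = t - s"
  have t: "t = d + s" using assms(2) d_def by simp
  define f where "f q = int (K ! q) - int q" for q
  define g where "g q = int (J ! q) - int q" for q
  have NK: "Nk k K = int t * (int t - int k) + (\<Sum>q<d. f q) + (\<Sum>p<s. f (d+p))"
    unfolding Nk_def f_def using assms(4) t sum_split_shift[of _ d s] by simp
  have NJ: "Nk k J = int s * (int s - int k) + (\<Sum>p<s. g p)"
    unfolding Nk_def g_def using assms(3) by simp
  have f0: "(\<Sum>q<d. f q) \<ge> 0"
    unfolding f_def using nth_ge_idx[OF assms(6)] assms(4) t
    by (intro sum_nonneg) fastforce
  have fg: "f (d+p) \<ge> g p - int d" if "p < s" for p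
    using assms(7) that unfolding f_def g_def d_def by force
  have S: "(\<Sum>p<s. f (d+p)) \<ge> (\<Sum>p<s. g p) - int s * int d"
  proof -
    have "(\<Sum>p<s. f (d+p)) \<ge> (\<Sum>p<s. g p - int d)"
      using fg by (intro sum_mono) auto
    then show ?thesis by (simp add: sum_subtractf)
  qed
  have alg: "int t * (int t - int k) - int s * int d - int s * (int s - int k)
      = int d * (int t - int k)" using t by (simp add: algebra_simps)
  have ge: "Nk k K \<ge> Nk k J + int d * (int t - int k)"
    using NK NJ f0 S alg by linarith
  have dnn: "int d * (int t - int k) \<ge> 0" using assms(1,2) by simp
  have strict: "Nk k K > Nk k J" if ne: "K \<noteq> J"
  proof (cases "d = 0")
    case False
    then have "int d * (int t - int k) > 0" using assms(1,2) t by simp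
    then show ?thesis using ge by linarith
  next
    case True
    then have ts: "t = s" using t by simp
    then obtain p where p: "p < s" "K ! p \<noteq> J ! p"
      using ne assms(3,4) nth_equalityI by metis
    have "(\<Sum>p<s. g p) < (\<Sum>p<s. f (d+p))"
    proof (rule sum_strict_mono_ex1)
      show "\<forall>x\<in>{..<s}. g x \<le> f (d + x)" using fg True by auto
      show "\<exists>a\<in>{..<s}. g a < f (d + a)"
        using p assms(7) True ts unfolding f_def g_def
        by (intro bexI[of _ p]) (auto simp: le_neq_implies_less)
    qed auto
    then show ?thesis using NK NJ True ts by simp
  qed
  show ?thesis using ge dnn strict by linarith
qed

end
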